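(* Let $d,d'\in\mathcal D$ with quantities $(\mathbf P,\mathbf r,\boldsymbol\pi,J_\mu,\mathbf g)$ for $d$ and $(\mathbf P',\mathbf r')$ for $d'$. The function $\delta\mapsto J^\delta_{\mu,\sigma}$ (combined metric of the mixed policy $d^{\delta,d'}$) is differentiable at $\delta=0$ (from the right), with $$\frac{\mathrm d J^\delta_{\mu,\sigma}}{\mathrm d\delta}\Big|_{\delta=0}=\boldsymbol\pi\Big[(\mathbf P'-\mathbf P)\mathbf g+\mathbf r'-\beta(\mathbf r'-J_\mu\mathbf 1)^2_\odot-\mathbf r+\beta(\mathbf r-J_\mu\mathbf 1)^2_\odot\Big].$$
   Context: Let $\mathcal S=\{1,\dots,S\}$ be a finite state space and $\mathcal A$ a finite action set, with transition probabilities $p^a(i,j)$ ($\sum_j p^a(i,j)=1$) and rewards $r(i,a)\in\mathbb R$. A deterministic stationary policy is a map $d:\mathcal S\to\mathcal A$; $\mathcal D$ is the set of these; $\mathbf P^d$ has entries $p^{d(i)}(i,j)$ and $\mathbf r^d$ has entries $r(i,d(i))$. Standing assumption: every $\mathbf P^d$, $d\in\mathcal D$, is irreducible. For $d$: $\boldsymbol\pi^d$ is the unique stationary distribution (row vector, all entries positive), $J^d_\mu=\boldsymbol\pi^d\mathbf r^d$, and for fixed $\beta>0$, $J^d_{\mu,\sigma}=\boldsymbol\pi^d\mathbf f^d$ with $f^d(i)=r(i,d(i))-\beta(r(i,d(i))-J^d_\mu)^2$; $\mathbf g^d$ is any solution of $\mathbf g^d=\mathbf f^d-J^d_{\mu,\sigma}\mathbf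 1+\mathbf P^d\mathbf g^d$. Mixed policy: for $d,d'\in\mathcal D$ and $\delta\in[0,1]$, $d^{\delta,d'}$ is the randomized stationary policy which at each visit to state $i$ independently takes action $d(i)$ with probability $1-\delta$ and $d'(i)$ with probability $\delta$. Its transition matrix is $\mathbf P^\delta=\mathbf P+\delta(\mathbf P'-\mathbf P)$ (irreducible, with unique positive stationary distribution $\boldsymbol\pi^\delta$), its mean is $J^\delta_\mu=\boldsymbol\pi^\delta[\mathbf r+\delta(\mathbf r'-\mathbf r)]$, and its combined metric is $J^\delta_{\mu,\sigma}=\boldsymbol\pi^\delta\mathbf f^\delta$ with $f^\delta(i)=(1-\delta)[r(i)-\beta(r(i)-J^\delta_\mu)^2]+\delta[r'(i)-\beta(r'(i)-J^\delta_\mu)^2]$. For a vector $\mathbf v$, $(\mathbf v)^2_\odot$ is its componentwise square. *)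

theory Defs
  imports Complex_Main
begin

definition stochastic :: "('s::finite \<Rightarrow> 's \<Rightarrow> real) \<Rightarrow> bool" where
  "stochastic M \<longleftrightarrow> (\<forall>i j. M i j \<ge> 0) \<and> (\<forall>i. (\<Sum>j\<in>UNIV. M i j) = 1)"

definition irreducible_mat :: "('s::finite \<Rightarrow> 's \<Rightarrow> real) \<Rightarrow> bool" where
  "irreducible_mat M \<longleftrightarrow> (\<forall>i j. (i, j) \<in> {(i, j). M i j > 0}\<^sup>*)"

definition stationary :: "('s::finite \<Rightarrow> 's \<Rightarrow> real) \<Rightarrow> ('s \<Rightarrow> real) \<Rightarrow> bool" where
  "stationary M \<pi> \<longleftrightarrow> (\<forall>j. \<pi> j \<ge> 0) \<and> (\<Sum>j\<in>UNIV. \<pi> j) = 1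
      \<and> (\<forall>j. (\<Sum>i\<in>UNIV. \<pi> i * M i j) = \<pi> j)"

text \<open>The (unique, under irreducibility) stationary distribution.\<close>
definition stat_dist :: "('s::finite \<Rightarrow> 's \<Rightarrow> real) \<Rightarrow> 's \<Rightarrow> real" where
  "stat_dist M = (THE \<pi>. stationary M \<pi>)"

definition Pmat :: "('a \<Rightarrow> 's \<Rightarrow> 's \<Rightarrow> real) \<Rightarrow> ('s \<Rightarrow> 'a) \<Rightarrow> 's \<Rightarrow> 's \<Rightarrow> real" where
  "Pmat p d = (\<lambda>i j. p (d i) i j)"

definition J_mu :: "('a \<Rightarrow> 's::finite \<Rightarrow> 's \<Rightarrow> real) \<Rightarrow> ('s \<Rightarrow> 'a \<Rightarrow> real) \<Rightarrow> ('s \<Rightarrow> 'a) \<Rightarrow> real" where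
  "J_mu p r d = (\<Sum>i\<in>UNIV. stat_dist (Pmat p d) i * r i (d i))"

definition f_vec :: "real \<Rightarrow> ('a \<Rightarrow> 's::finite \<Rightarrow> 's \<Rightarrow> real) \<Rightarrow> ('s \<Rightarrow> 'a \<Rightarrow> real) \<Rightarrow> ('s \<Rightarrow> 'a) \<Rightarrow> 's \<Rightarrow> real" where
  "f_vec \<beta> p r d = (\<lambda>i. r i (d i) - \<beta> * (r i (d i) - J_mu p r d)\<^sup>2)"

definition J_ms :: "real \<Rightarrow> ('a \<Rightarrow> 's::finite \<Rightarrow> 's \<Rightarrow> real) \<Rightarrow> ('s \<Rightarrow> 'a \<Rightarrow> real) \<Rightarrow> ('s \<Rightarrow> 'a) \<Rightarrow> real" where
  "J_ms \<beta> p r d = (\<Sum>i\<in>UNIV. stat_dist (Pmat p d) i * f_vec \<beta> p r d i)"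

definition mixP :: "('a \<Rightarrow> 's \<Rightarrow> 's \<Rightarrow> real) \<Rightarrow> ('s \<Rightarrow> 'a) \<Rightarrow> ('s \<Rightarrow> 'a) \<Rightarrow> real \<Rightarrow> 's \<Rightarrow> 's \<Rightarrow> real" where
  "mixP p d d' \<delta> = (\<lambda>i j. p (d i) i j + \<delta> * (p (d' i) i j - p (d i) i j))"

definition mix_mu :: "('a \<Rightarrow> 's::finite \<Rightarrow> 's \<Rightarrow> real) \<Rightarrow> ('s \<Rightarrow> 'a \<Rightarrow> real) \<Rightarrow> ('s \<Rightarrow> 'a) \<Rightarrow> ('s \<Rightarrow> 'a) \<Rightarrow> real \<Rightarrow> real" where
  "mix_mu p r d d' \<delta> =
     (\<Sum>i\<in>UNIV. stat_dist (mixP p d d' \<delta>) i * (r i (d i) + \<delta> * (r i (d' i) - r i (d i))))"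

definition mix_ms :: "real \<Rightarrow> ('a \<Rightarrow> 's::finite \<Rightarrow> 's \<Rightarrow> real) \<Rightarrow> ('s \<Rightarrow> 'a \<Rightarrow> real) \<Rightarrow> ('s \<Rightarrow> 'a) \<Rightarrow> ('s \<Rightarrow> 'a) \<Rightarrow> real \<Rightarrow> real" where
  "mix_ms \<beta> p r d d' \<delta> =
     (let J = mix_mu p r d d' \<delta> in
      \<Sum>i\<in>UNIV. stat_dist (mixP p d d' \<delta>) i *
        ((1 - \<delta>) * (r i (d i) - \<beta> * (r i (d i) - J)\<^sup>2)
         + \<delta> * (r i (d' i) - \<beta> * (r i (d' i) - J)\<^sup>2)))"

end

theory Submission
  imports Defs "HOL-Analysis.Analysis"
begin


lemma prop_zero:
  fixes M :: "'s::finite \<Rightarrow> 's \<Rightarrow> real"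
  assumes nn: "\<And>i j. M i j \<ge> 0" and irr: "irreducible_mat M"
    and y0: "\<And>i. y i \<ge> 0" and st: "\<And>j. (\<Sum>i\<in>UNIV. y i * M i j) = y j"
    and yk: "y k = 0"
  shows "y i = 0"
proof -
  have "(i, k) \<in> {(i, j). M i j > 0}\<^sup>*" using irr unfolding irreducible_mat_def by blast
  then show ?thesis
  proof (induction rule: converse_rtrancl_induct)
    case base then show ?case using yk .
  next
    case (step a b)
    have "(\<Sum>i\<in>UNIV. y i * M i b) = 0" using st[of b] step.IH by simp
    then have "\<forall>i\<in>UNIV. y i * M i b = 0"
      by (subst sum_nonneg_eq_0_iff[symmetric]) (auto simp: y0 nn)
    then have "y a * M a b = 0" by blast
    with step.hyps(1) show ?case by auto
  qed
qed

lemma stat_pos: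
  fixes M :: "'s::finite \<Rightarrow> 's \<Rightarrow> real"
  assumes nn: "\<And>i j. M i j \<ge> 0" and irr: "irreducible_mat M" and st: "stationary M \<pi>"
  shows "\<pi> i > 0"
proof (rule ccontr)
  assume "\<not> \<pi> i > 0"
  moreover have "\<pi> i \<ge> 0" using st unfolding stationary_def by blast
  ultimately have "\<pi> i = 0" by linarith
  then have "\<And>j. \<pi> j = 0" using prop_zero[OF nn irr, of \<pi> i] st unfolding stationary_def by blast
  then show False using st unfolding stationary_def by simp
qed

lemma signed_unique:
  fixes M :: "'s::finite \<Rightarrow> 's \<Rightarrow> real"
  assumes nn: "\<And>i j. M i j \<ge> 0" and irr: "irreducible_mat M" and st: "stationary M \<pi>"
    and xs: "\<And>j. (\<Sum>i\<in>UNIV. x i * M i j) = x j"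
  shows "x i = (\<Sum>k\<in>UNIV. x k) * \<pi> i"
proof -
  have pp: "\<And>i. \<pi> i > 0" using stat_pos[OF nn irr st] .
  define c where "c = Min (range (\<lambda>i. x i / \<pi> i))"
  have "c \<in> range (\<lambda>i. x i / \<pi> i)" unfolding c_def by (intro Min_in) auto
  then obtain k where ck: "c = x k / \<pi> k" by auto
  have cle: "\<And>i. c \<le> x i / \<pi> i" unfolding c_def by (intro Min_le) auto
  define z where "z = (\<lambda>i. x i - c * \<pi> i)"
  have z0: "\<And>i. z i \<ge> 0" unfolding z_def using cle pp by (simp add: field_simps)
  have zk: "z k = 0" unfolding z_def ck using pp[of k] by simp
  have zs: "(\<Sum>i\<in>UNIV. z i * M i j) = z j" for j
  proof -
    have "(\<Sum>i\<in>UNIV. z i * M i j) = (\<Sum>i\<in>UNIV. x i * M i j) - c * (\<Sum>i\<in>UNIV. \<pi> i * M i j)"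
      unfolding z_def by (simp add: algebra_simps sum_subtractf sum_distrib_left)
    also have "\<dots> = z j" using xs st unfolding stationary_def z_def by simp
    finally show ?thesis .
  qed
  have zz: "\<And>i. z i = 0" using prop_zero[OF nn irr z0 zs zk] .
  then have xe: "\<And>i. x i = c * \<pi> i" unfolding z_def by (simp add: algebra_simps)
  have "(\<Sum>k\<in>UNIV. x k) = c" using st unfolding stationary_def xe by (simp add: sum_distrib_left[symmetric])
  then show ?thesis using xe by simp
qed

lemma stat_unique:
  fixes M :: "'s::finite \<Rightarrow> 's \<Rightarrow> real"
  assumes nn: "\<And>i j. M i j \<ge> 0" and irr: "irreducible_mat M" and st: "stationary M \<pi>"
    and st2: "stationary M \<rho>"
  shows "\<rho> = \<pi>"
proof
  fix i show "\<rho> i = \<pi> i" using signed_unique[OF nn irr st, of \<rho> i] st2 unfolding stationary_def by simp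
qed

lemma stat_exists:
  fixes M :: "'s::finite \<Rightarrow> 's \<Rightarrow> real"
  assumes sto: "stochastic M"
  shows "\<exists>\<pi>. stationary M \<pi>"
proof -
  define S where "S = {v::real^'s. (\<forall>i. 0 \<le> v$i) \<and> (\<Sum>i\<in>UNIV. v$i) = 1}"
  define f where "f = (\<lambda>v::real^'s. \<chi> j. \<Sum>i\<in>UNIV. v$i * M i j)"
  have nn: "\<And>i j. M i j \<ge> 0" and rs: "\<And>i. (\<Sum>j\<in>UNIV. M i j) = 1"
    using sto unfolding stochastic_def by auto
  have "bounded S"
  proof -
    have "norm v \<le> 1" if "v \<in> S" for v
    proof -
      have "norm v \<le> (\<Sum>i\<in>UNIV. \<bar>v$i\<bar>)" by (rule norm_le_l1_cart)
      also have "\<dots> = (\<Sum>i\<in>UNIV. v$i)" using that unfolding S_def by auto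
      finally show ?thesis using that unfolding S_def by auto
    qed
    then show ?thesis unfolding bounded_iff by blast
  qed
  moreover have "closed S"
  proof -
    have "S = {v::real^'s. \<forall>i. 0 \<le> v$i} \<inter> {v. (\<Sum>i\<in>UNIV. v$i) = 1}" unfolding S_def by auto
    moreover have "closed {v::real^'s. \<forall>i. 0 \<le> v$i}"
      by (intro closed_Collect_all closed_Collect_le continuous_on_const continuous_on_component continuous_on_id)
    moreover have "closed {v::real^'s. (\<Sum>i\<in>UNIV. v$i) = 1}"
      by (intro closed_Collect_eq continuous_on_const continuous_on_sum continuous_on_component continuous_on_id)
    ultimately show ?thesis by auto
  qed
  ultimately have cS: "compact S" by (simp add: compact_eq_bounded_closed)
  have cvS: "convex S" unfolding convex_def
  proof (intro ballI allI impI)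
    fix x y :: "real^'s" and u v :: real
    assume x: "x \<in> S" and y: "y \<in> S" and u: "0 \<le> u" and v: "0 \<le> v" and uv: "u + v = 1"
    have "\<forall>i. 0 \<le> (u *\<^sub>R x + v *\<^sub>R y)$i" using x y u v unfolding S_def by simp
    moreover have "(\<Sum>i\<in>UNIV. (u *\<^sub>R x + v *\<^sub>R y)$i) = 1"
      using x y uv unfolding S_def by (simp add: sum.distrib sum_distrib_left[symmetric])
    ultimately show "u *\<^sub>R x + v *\<^sub>R y \<in> S" unfolding S_def by blast
  qed
  have neS: "S \<noteq> {}"
  proof -
    obtain a :: 's where True by blast
    have "(\<chi> i. if i = a then 1 else 0) \<in> S" unfolding S_def by auto
    then show ?thesis by blast
  qed
  have ctf: "continuous_on S f" unfolding f_def
    by (intro continuous_on_vec_lambda continuous_on_sum continuous_on_mult continuous_on_const continuous_on_component continuous_on_id)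
  have fS: "f \<in> S \<rightarrow> S"
  proof
    fix v assume v: "v \<in> S"
    have "(\<Sum>j\<in>UNIV. \<Sum>i\<in>UNIV. v$i * M i j) = (\<Sum>i\<in>UNIV. v$i * (\<Sum>j\<in>UNIV. M i j))"
      by (subst sum.swap) (simp add: sum_distrib_left)
    also have "\<dots> = 1" using v rs unfolding S_def by simp
    finally show "f v \<in> S" using v nn unfolding S_def f_def by (auto intro!: sum_nonneg)
  qed
  obtain v where vS: "v \<in> S" and fv: "f v = v" using brouwer[OF cS cvS neS ctf fS] by blast
  have "(\<Sum>i\<in>UNIV. v$i * M i j) = v$j" for j
  proof -
    have "(f v)$j = v$j" using fv by simp
    then show ?thesis unfolding f_def by simp
  qed
  then have "stationary M (\<lambda>i. v$i)" using vS unfolding stationary_def S_def by simp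
  then show ?thesis by blast
qed

lemma bounded_inv:
  fixes M :: "'s::finite \<Rightarrow> 's \<Rightarrow> real"
  assumes nn: "\<And>i j. M i j \<ge> 0" and irr: "irreducible_mat M" and st: "stationary M \<pi>"
  shows "\<exists>K>0. \<forall>x::'s\<Rightarrow>real. (\<Sum>i\<in>UNIV. x i) = 0 \<longrightarrow>
           (\<Sum>i\<in>UNIV. \<bar>x i\<bar>) \<le> K * (\<Sum>j\<in>UNIV. \<bar>x j - (\<Sum>i\<in>UNIV. x i * M i j)\<bar>)"
proof -
  define T where "T = {v::real^'s. (\<Sum>i\<in>UNIV. \<bar>v$i\<bar>) = 1 \<and> (\<Sum>i\<in>UNIV. v$i) = 0}"
  define \<phi> where "\<phi> = (\<lambda>v::real^'s. \<Sum>j\<in>UNIV. \<bar>v$j - (\<Sum>i\<in>UNIV. v$i * M i j)\<bar>)"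
  have key: "(\<Sum>i\<in>UNIV. \<bar>x i\<bar>) \<le> K * (\<Sum>j\<in>UNIV. \<bar>x j - (\<Sum>i\<in>UNIV. x i * M i j)\<bar>)"
    if K: "\<forall>v\<in>T. 1 \<le> K * \<phi> v" and x0: "(\<Sum>i\<in>UNIV. x i) = 0" for K and x :: "'s \<Rightarrow> real"
  proof (cases "(\<Sum>i\<in>UNIV. \<bar>x i\<bar>) = 0")
    case True
    have "\<forall>i\<in>UNIV. \<bar>x i\<bar> = 0" using True by (subst sum_nonneg_eq_0_iff[symmetric]) auto
    then have "\<And>i. x i = 0" by simp
    then show ?thesis by simp
  next
    case False
    define L where "L = (\<Sum>i\<in>UNIV. \<bar>x i\<bar>)"
    have Lp: "L > 0" using False unfolding L_def by (metis less_eq_real_def sum_abs_ge_zero)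
    define v where "v = (\<chi> i. x i / L)"
    have "(\<Sum>i\<in>UNIV. \<bar>v$i\<bar>) = (\<Sum>i\<in>UNIV. \<bar>x i\<bar>) / L" unfolding v_def using Lp
      by (simp add: sum_divide_distrib)
    then have "v \<in> T" unfolding T_def using Lp x0 unfolding L_def[symmetric]
      by (simp add: v_def sum_divide_distrib[symmetric])
    then have "1 \<le> K * \<phi> v" using K by blast
    also have "\<phi> v = (\<Sum>j\<in>UNIV. \<bar>x j - (\<Sum>i\<in>UNIV. x i * M i j)\<bar>) / L"
    proof -
      have "\<phi> v = (\<Sum>j\<in>UNIV. \<bar>x j - (\<Sum>i\<in>UNIV. x i * M i j)\<bar> / L)"
        unfolding \<phi>_def v_def
      proof (intro sum.cong refl)
        fix j
        have "(\<chi> i. x i / L) $ j - (\<Sum>i\<in>UNIV. (\<chi> i. x i / L) $ i * M i j)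
              = (x j - (\<Sum>i\<in>UNIV. x i * M i j)) / L"
          by (simp add: diff_divide_distrib sum_divide_distrib)
        then show "\<bar>(\<chi> i. x i / L) $ j - (\<Sum>i\<in>UNIV. (\<chi> i. x i / L) $ i * M i j)\<bar>
              = \<bar>x j - (\<Sum>i\<in>UNIV. x i * M i j)\<bar> / L" using Lp by simp
      qed
      then show ?thesis by (simp add: sum_divide_distrib)
    qed
    finally show ?thesis using Lp unfolding L_def[symmetric] by (simp add: field_simps)
  qed
  show ?thesis
  proof (cases "T = {}")
    case True
    then show ?thesis using key[of 1] by (intro exI[of _ 1]) auto
  next
    case False
    have "bounded T"
    proof -
      have "norm v \<le> 1" if "v \<in> T" for v
        using norm_le_l1_cart[of v] that unfolding T_def by auto
      then show ?thesis unfolding bounded_iff by blast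
    qed
    moreover have "closed T"
    proof -
      have "T = {v::real^'s. (\<Sum>i\<in>UNIV. \<bar>v$i\<bar>) = 1} \<inter> {v. (\<Sum>i\<in>UNIV. v$i) = 0}" unfolding T_def by auto
      moreover have "closed {v::real^'s. (\<Sum>i\<in>UNIV. \<bar>v$i\<bar>) = 1}"
        by (intro closed_Collect_eq continuous_on_const continuous_on_sum continuous_on_rabs continuous_on_component continuous_on_id)
      moreover have "closed {v::real^'s. (\<Sum>i\<in>UNIV. v$i) = 0}"
        by (intro closed_Collect_eq continuous_on_const continuous_on_sum continuous_on_component continuous_on_id)
      ultimately show ?thesis by auto
    qed
    ultimately have cT: "compact T" by (simp add: compact_eq_bounded_closed)
    have ct: "continuous_on T \<phi>" unfolding \<phi>_def
      by (intro continuous_on_sum continuous_on_rabs continuous_on_diff continuous_on_mult continuous_on_const continuous_on_component continuous_on_id)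
    obtain w where wT: "w \<in> T" and wmin: "\<forall>y\<in>T. \<phi> w \<le> \<phi> y"
      using continuous_attains_inf[OF cT False ct] by blast
    have mpos: "\<phi> w > 0"
    proof (rule ccontr)
      assume "\<not> \<phi> w > 0"
      moreover have "\<phi> w \<ge> 0" unfolding \<phi>_def by (simp add: sum_nonneg)
      ultimately have "\<phi> w = 0" by linarith
      then have "\<forall>j\<in>UNIV. \<bar>w$j - (\<Sum>i\<in>UNIV. w$i * M i j)\<bar> = 0"
        unfolding \<phi>_def by (subst sum_nonneg_eq_0_iff[symmetric]) auto
      then have w0: "\<bar>w$j - (\<Sum>i\<in>UNIV. w$i * M i j)\<bar> = 0" for j by blast
      have ws: "(\<Sum>i\<in>UNIV. w$i * M i j) = w$j" for j using w0[of j] by linarith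
      have sg: "w$i = (\<Sum>k\<in>UNIV. w$k) * \<pi> i" for i
        by (rule signed_unique[OF nn irr st, of "\<lambda>i. w$i"]) (rule ws)
      have s0: "(\<Sum>k\<in>UNIV. w$k) = 0" using wT unfolding T_def by blast
      have "\<And>i. w$i = 0" using sg s0 by (metis mult_zero_left)
      then show False using wT unfolding T_def by simp
    qed
    show ?thesis
    proof (intro exI[of _ "1 / \<phi> w"] conjI allI impI)
      show "1 / \<phi> w > 0" using mpos by simp
      fix x :: "'s \<Rightarrow> real" assume x0: "(\<Sum>i\<in>UNIV. x i) = 0"
      have KK: "\<forall>v\<in>T. 1 \<le> 1 / \<phi> w * \<phi> v" using wmin mpos by (simp add: field_simps)
      show "(\<Sum>i\<in>UNIV. \<bar>x i\<bar>) \<le> 1 / \<phi> w * (\<Sum>j\<in>UNIV. \<bar>x j - (\<Sum>i\<in>UNIV. x i * M i j)\<bar>)"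
        by (rule key[OF KK x0])
    qed
  qed
qed


lemma stat_dist_stat:
  fixes M :: "'s::finite \<Rightarrow> 's \<Rightarrow> real"
  assumes "stochastic M" "irreducible_mat M"
  shows "stationary M (stat_dist M)"
proof -
  obtain \<pi> where st: "stationary M \<pi>" using stat_exists[OF assms(1)] by blast
  have nn: "\<And>i j. M i j \<ge> 0" using assms(1) unfolding stochastic_def by auto
  have "stat_dist M = \<pi>" unfolding stat_dist_def
    by (rule the_equality) (rule st, rule stat_unique[OF nn assms(2) st])
  then show ?thesis using st by simp
qed

theorem lemma2:
  fixes p :: "'a::finite \<Rightarrow> 's::finite \<Rightarrow> 's \<Rightarrow> real"
    and r :: "'s \<Rightarrow> 'a \<Rightarrow> real"
    and \<beta> :: real
    and d d' :: "'s \<Rightarrow> 'a"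
    and g :: "'s \<Rightarrow> real"
  assumes beta_pos: "\<beta> > 0"
    and p_stoch: "\<And>a. stochastic (p a)"
    and irred: "\<And>e :: 's \<Rightarrow> 'a. irreducible_mat (Pmat p e)"
    and poisson: "\<And>i. g i = f_vec \<beta> p r d i - J_ms \<beta> p r d + (\<Sum>j\<in>UNIV. Pmat p d i j * g j)"
  shows "((\<lambda>\<delta>. mix_ms \<beta> p r d d' \<delta>) has_real_derivative
           (\<Sum>i\<in>UNIV. stat_dist (Pmat p d) i *
              ((\<Sum>j\<in>UNIV. (Pmat p d' i j - Pmat p d i j) * g j)
               + r i (d' i) - \<beta> * (r i (d' i) - J_mu p r d)\<^sup>2
               - r i (d i) + \<beta> * (r i (d i) - J_mu p r d)\<^sup>2)))
         (at 0 within {0..1})"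
proof -
  define P where "P = Pmat p d"
  define P' where "P' = Pmat p d'"
  define Pm where "Pm = mixP p d d'"
  define pd where "pd = (\<lambda>\<delta>. stat_dist (Pm \<delta>))"
  define \<pi> where "\<pi> = stat_dist P"
  define J where "J = J_mu p r d"
  define R where "R = (\<lambda>i. r i (d i))"
  define R' where "R' = (\<lambda>i. r i (d' i))"
  define Jd where "Jd = mix_mu p r d d'"
  define A where "A = (\<lambda>J i. R i - \<beta> * (R i - J)\<^sup>2)"
  define B where "B = (\<lambda>J i. R' i - \<beta> * (R' i - J)\<^sup>2)"
  have Pm_eq: "Pm \<delta> i j = P i j + \<delta> * (P' i j - P i j)" for \<delta> i j
    unfolding Pm_def P_def P'_def mixP_def Pmat_def by simp
  have Pm0: "Pm 0 = P" unfolding Pm_def P_def mixP_def Pmat_def by simp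
  have pd0: "pd 0 = \<pi>" unfolding pd_def \<pi>_def Pm0 ..
  have Pnn: "P i j \<ge> 0" and P'nn: "P' i j \<ge> 0" and Prs: "(\<Sum>j\<in>UNIV. P i j) = 1"
     and P'rs: "(\<Sum>j\<in>UNIV. P' i j) = 1" for i j
    using p_stoch unfolding P_def P'_def Pmat_def stochastic_def by auto
  have stoch: "stochastic (Pm \<delta>)" if "\<delta> \<in> {0..1}" for \<delta>
  proof -
    have "Pm \<delta> i j \<ge> 0" for i j
    proof -
      have "Pm \<delta> i j = (1 - \<delta>) * P i j + \<delta> * P' i j" unfolding Pm_eq by (simp add: algebra_simps)
      also have "\<dots> \<ge> 0" using that Pnn[of i j] P'nn[of i j] by (auto intro!: add_nonneg_nonneg mult_nonneg_nonneg)
      finally show ?thesis .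
    qed
    moreover have "(\<Sum>j\<in>UNIV. Pm \<delta> i j) = 1" for i
      unfolding Pm_eq by (simp add: sum.distrib sum_subtractf sum_distrib_left[symmetric] Prs P'rs)
    ultimately show ?thesis unfolding stochastic_def by blast
  qed
  have irrm: "irreducible_mat (Pm \<delta>)" if "\<delta> \<in> {0..1}" for \<delta>
  proof (cases "\<delta> = 1")
    case True
    have "Pm \<delta> = P'" unfolding True by (rule ext, rule ext) (simp add: Pm_eq)
    then show ?thesis using irred[of d'] unfolding P'_def by simp
  next
    case False
    then have d1: "\<delta> < 1" using that by auto
    have sub: "{(i, j). P i j > 0} \<subseteq> {(i, j). Pm \<delta> i j > 0}"
    proof clarify
      fix i j assume "P i j > 0"
      have "Pm \<delta> i j = (1 - \<delta>) * P i j + \<delta> * P' i j" unfolding Pm_eq by (simp add: algebra_simps)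
      moreover have "(1 - \<delta>) * P i j > 0" using d1 \<open>P i j > 0\<close> by simp
      moreover have "\<delta> * P' i j \<ge> 0" using that P'nn[of i j] by simp
      ultimately show "Pm \<delta> i j > 0" by linarith
    qed
    show ?thesis using irred[of d] rtrancl_mono[OF sub] unfolding irreducible_mat_def P_def by blast
  qed
  have statd: "stationary (Pm \<delta>) (pd \<delta>)" if "\<delta> \<in> {0..1}" for \<delta>
    unfolding pd_def by (rule stat_dist_stat[OF stoch[OF that] irrm[OF that]])
  have pist: "stationary P \<pi>" using statd[of 0] by (simp add: pd0 Pm0)
  have J_eq: "J = (\<Sum>i\<in>UNIV. \<pi> i * R i)" unfolding J_def J_mu_def \<pi>_def P_def R_def ..
  have Jd_eq: "Jd \<delta> = (\<Sum>i\<in>UNIV. pd \<delta> i * (R i + \<delta> * (R' i - R i)))" for \<delta>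
    unfolding Jd_def mix_mu_def pd_def Pm_def R_def R'_def ..
  have Jd0: "Jd 0 = J" unfolding Jd_eq J_eq pd0 by simp
  have ms_eq: "mix_ms \<beta> p r d d' \<delta> = (\<Sum>i\<in>UNIV. pd \<delta> i * ((1 - \<delta>) * A (Jd \<delta>) i + \<delta> * B (Jd \<delta>) i))" for \<delta>
    unfolding mix_ms_def Let_def A_def B_def Jd_def pd_def Pm_def R_def R'_def ..
  have Jms_eq: "J_ms \<beta> p r d = (\<Sum>i\<in>UNIV. \<pi> i * A J i)"
    unfolding J_ms_def f_vec_def A_def \<pi>_def P_def J_def R_def ..
  have ms0: "mix_ms \<beta> p r d d' 0 = J_ms \<beta> p r d" unfolding ms_eq Jms_eq Jd0 pd0 by simp
  have pnn: "pd \<delta> i \<ge> 0" and ps1: "(\<Sum>i\<in>UNIV. pd \<delta> i) = 1"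
    and pstat: "(\<Sum>i\<in>UNIV. pd \<delta> i * Pm \<delta> i j) = pd \<delta> j"
    if "\<delta> \<in> {0..1}" for \<delta> i j using statd[OF that] unfolding stationary_def by auto
  have ple1: "pd \<delta> i \<le> 1" if "\<delta> \<in> {0..1}" for \<delta> i
  proof -
    have "pd \<delta> i \<le> (\<Sum>i\<in>UNIV. pd \<delta> i)" by (rule member_le_sum) (auto intro: pnn[OF that])
    then show ?thesis using ps1[OF that] by simp
  qed
  have pinn: "\<pi> i \<ge> 0" and pis1: "(\<Sum>i\<in>UNIV. \<pi> i) = 1"
    and pistat: "(\<Sum>i\<in>UNIV. \<pi> i * P i j) = \<pi> j" for i j using pist unfolding stationary_def by auto
  have ide: "(pd \<delta> j - \<pi> j) - (\<Sum>i\<in>UNIV. (pd \<delta> i - \<pi> i) * P i j)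
             = \<delta> * (\<Sum>i\<in>UNIV. pd \<delta> i * (P' i j - P i j))" if "\<delta> \<in> {0..1}" for \<delta> j
  proof -
    have "pd \<delta> j = (\<Sum>i\<in>UNIV. pd \<delta> i * P i j) + \<delta> * (\<Sum>i\<in>UNIV. pd \<delta> i * (P' i j - P i j))"
    proof -
      have "(\<Sum>i\<in>UNIV. pd \<delta> i * Pm \<delta> i j) = (\<Sum>i\<in>UNIV. pd \<delta> i * P i j + \<delta> * (pd \<delta> i * (P' i j - P i j)))"
        unfolding Pm_eq by (intro sum.cong) (simp_all add: algebra_simps)
      also have "\<dots> = (\<Sum>i\<in>UNIV. pd \<delta> i * P i j) + \<delta> * (\<Sum>i\<in>UNIV. pd \<delta> i * (P' i j - P i j))"
        by (simp add: sum.distrib sum_distrib_left)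
      finally show ?thesis using pstat[OF that, of j] by simp
    qed
    moreover have "(\<Sum>i\<in>UNIV. (pd \<delta> i - \<pi> i) * P i j) = (\<Sum>i\<in>UNIV. pd \<delta> i * P i j) - \<pi> j"
      unfolding pistat[of j, symmetric] by (simp add: algebra_simps sum_subtractf)
    ultimately show ?thesis by simp
  qed
  obtain K where Kp: "K > 0" and Kb: "\<And>x::'s\<Rightarrow>real. (\<Sum>i\<in>UNIV. x i) = 0 \<Longrightarrow>
           (\<Sum>i\<in>UNIV. \<bar>x i\<bar>) \<le> K * (\<Sum>j\<in>UNIV. \<bar>x j - (\<Sum>i\<in>UNIV. x i * P i j)\<bar>)"
    using bounded_inv[OF Pnn _ pist] irred[of d] unfolding P_def by blast
  define C where "C = (\<Sum>j\<in>UNIV. \<Sum>i\<in>UNIV. \<bar>P' i j - P i j\<bar>)"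
  have C0: "C \<ge> 0" unfolding C_def by (intro sum_nonneg) auto
  define L where "L = K * C"
  have L0: "L \<ge> 0" unfolding L_def using Kp C0 by simp
  have eb: "\<bar>pd \<delta> i - \<pi> i\<bar> \<le> L * \<delta>" if dI: "\<delta> \<in> {0..1}" for \<delta> i
  proof -
    have s0: "(\<Sum>i\<in>UNIV. pd \<delta> i - \<pi> i) = 0" using ps1[OF dI] pis1 by (simp add: sum_subtractf)
    have "\<bar>pd \<delta> i - \<pi> i\<bar> \<le> (\<Sum>i\<in>UNIV. \<bar>pd \<delta> i - \<pi> i\<bar>)" by (rule member_le_sum) auto
    also have "\<dots> \<le> K * (\<Sum>j\<in>UNIV. \<bar>(pd \<delta> j - \<pi> j) - (\<Sum>i\<in>UNIV. (pd \<delta> i - \<pi> i) * P i j)\<bar>)"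
      using Kb[OF s0] .
    also have "(\<Sum>j\<in>UNIV. \<bar>(pd \<delta> j - \<pi> j) - (\<Sum>i\<in>UNIV. (pd \<delta> i - \<pi> i) * P i j)\<bar>)
              = (\<Sum>j\<in>UNIV. \<delta> * \<bar>\<Sum>i\<in>UNIV. pd \<delta> i * (P' i j - P i j)\<bar>)"
      using dI by (simp add: ide[OF dI] abs_mult)
    also have "\<dots> \<le> (\<Sum>j\<in>UNIV. \<delta> * (\<Sum>i\<in>UNIV. \<bar>P' i j - P i j\<bar>))"
    proof (intro sum_mono mult_left_mono)
      fix j
      have "\<bar>\<Sum>i\<in>UNIV. pd \<delta> i * (P' i j - P i j)\<bar> \<le> (\<Sum>i\<in>UNIV. \<bar>pd \<delta> i * (P' i j - P i j)\<bar>)"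
        by (rule sum_abs)
      also have "\<dots> \<le> (\<Sum>i\<in>UNIV. \<bar>P' i j - P i j\<bar>)"
      proof (intro sum_mono)
        fix i
        have "\<bar>pd \<delta> i * (P' i j - P i j)\<bar> = pd \<delta> i * \<bar>P' i j - P i j\<bar>"
          using pnn[OF dI] by (simp add: abs_mult)
        also have "\<dots> \<le> 1 * \<bar>P' i j - P i j\<bar>" by (rule mult_right_mono) (use ple1[OF dI] in auto)
        finally show "\<bar>pd \<delta> i * (P' i j - P i j)\<bar> \<le> \<bar>P' i j - P i j\<bar>" by simp
      qed
      finally show "\<bar>\<Sum>i\<in>UNIV. pd \<delta> i * (P' i j - P i j)\<bar> \<le> (\<Sum>i\<in>UNIV. \<bar>P' i j - P i j\<bar>)" .
    qed (use dI in auto)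
    also have "\<dots> = \<delta> * C" unfolding C_def by (simp add: sum_distrib_left)
    finally show ?thesis using Kp unfolding L_def by (simp add: algebra_simps)
  qed
  define Jp where "Jp = (\<lambda>\<delta>. \<Sum>i\<in>UNIV. pd \<delta> i * R i)"
  define SR where "SR = (\<Sum>i\<in>UNIV. \<bar>R i\<bar>)"
  define SRR where "SRR = (\<Sum>i\<in>UNIV. \<bar>R' i - R i\<bar>)"
  define Bc where "Bc = L * SR + SRR"
  have Jb: "\<bar>Jd \<delta> - J\<bar> \<le> Bc * \<delta>" if dI: "\<delta> \<in> {0..1}" for \<delta>
  proof -
    have jeq: "Jd \<delta> - J = (\<Sum>i\<in>UNIV. (pd \<delta> i - \<pi> i) * R i) + \<delta> * (\<Sum>i\<in>UNIV. pd \<delta> i * (R' i - R i))"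
      unfolding Jd_eq J_eq
      by (simp add: algebra_simps sum.distrib sum_subtractf sum_distrib_left)
    have ja: "\<bar>\<Sum>i\<in>UNIV. (pd \<delta> i - \<pi> i) * R i\<bar> \<le> L * \<delta> * SR"
    proof -
      have "\<bar>\<Sum>i\<in>UNIV. (pd \<delta> i - \<pi> i) * R i\<bar> \<le> (\<Sum>i\<in>UNIV. \<bar>(pd \<delta> i - \<pi> i) * R i\<bar>)" by (rule sum_abs)
      also have "\<dots> \<le> (\<Sum>i\<in>UNIV. L * \<delta> * \<bar>R i\<bar>)"
        by (intro sum_mono) (simp add: abs_mult mult_right_mono eb[OF dI])
      finally show ?thesis unfolding SR_def by (simp add: sum_distrib_left)
    qed
    have jb: "\<bar>\<Sum>i\<in>UNIV. pd \<delta> i * (R' i - R i)\<bar> \<le> SRR"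
    proof -
      have "\<bar>\<Sum>i\<in>UNIV. pd \<delta> i * (R' i - R i)\<bar> \<le> (\<Sum>i\<in>UNIV. \<bar>pd \<delta> i * (R' i - R i)\<bar>)" by (rule sum_abs)
      also have "\<dots> \<le> (\<Sum>i\<in>UNIV. 1 * \<bar>R' i - R i\<bar>)"
      proof (intro sum_mono)
        fix i
        have "pd \<delta> i * \<bar>R' i - R i\<bar> \<le> 1 * \<bar>R' i - R i\<bar>"
          by (rule mult_right_mono) (simp_all add: ple1[OF dI])
        then show "\<bar>pd \<delta> i * (R' i - R i)\<bar> \<le> 1 * \<bar>R' i - R i\<bar>"
          by (simp add: abs_mult pnn[OF dI])
      qed
      finally show ?thesis unfolding SRR_def by simp
    qed
    have d0: "\<delta> \<ge> 0" using dI by simp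
    have "\<bar>\<delta> * (\<Sum>i\<in>UNIV. pd \<delta> i * (R' i - R i))\<bar> = \<delta> * \<bar>\<Sum>i\<in>UNIV. pd \<delta> i * (R' i - R i)\<bar>"
      using d0 by (simp add: abs_mult)
    also have "\<dots> \<le> \<delta> * SRR" using jb d0 by (rule mult_left_mono)
    finally have jc: "\<bar>\<delta> * (\<Sum>i\<in>UNIV. pd \<delta> i * (R' i - R i))\<bar> \<le> \<delta> * SRR" .
    have "\<bar>Jd \<delta> - J\<bar> \<le> L * \<delta> * SR + \<delta> * SRR"
      unfolding jeq using ja jc abs_triangle_ineq[of "\<Sum>i\<in>UNIV. (pd \<delta> i - \<pi> i) * R i" "\<delta> * (\<Sum>i\<in>UNIV. pd \<delta> i * (R' i - R i))"]
      by linarith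
    then show ?thesis unfolding Bc_def by (simp add: algebra_simps)
  qed
  define RHS where "RHS = (\<lambda>\<delta>. \<beta> * ((Jd \<delta> - J) / \<delta>) * (2 * Jp \<delta> - Jd \<delta> - J)
      + (\<Sum>j\<in>UNIV. (\<Sum>i\<in>UNIV. pd \<delta> i * (P' i j - P i j)) * g j)
      + (\<Sum>i\<in>UNIV. pd \<delta> i * (B (Jd \<delta>) i - A (Jd \<delta>) i)))"
  have Qeq: "(mix_ms \<beta> p r d d' \<delta> - mix_ms \<beta> p r d d' 0) / (\<delta> - 0) = RHS \<delta>"
    if dI: "\<delta> \<in> {0<..1}" for \<delta>
  proof -
    have dI': "\<delta> \<in> {0..1}" using dI by auto
    have m1: "mix_ms \<beta> p r d d' \<delta> = (\<Sum>i\<in>UNIV. pd \<delta> i * A (Jd \<delta>) i)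
                 + \<delta> * (\<Sum>i\<in>UNIV. pd \<delta> i * (B (Jd \<delta>) i - A (Jd \<delta>) i))"
      unfolding ms_eq by (simp add: algebra_simps sum.distrib sum_subtractf sum_distrib_left)
    have m2: "(\<Sum>i\<in>UNIV. pd \<delta> i * A (Jd \<delta>) i) - (\<Sum>i\<in>UNIV. \<pi> i * A J i)
       = (\<Sum>i\<in>UNIV. pd \<delta> i * (A (Jd \<delta>) i - A J i)) + (\<Sum>i\<in>UNIV. (pd \<delta> i - \<pi> i) * A J i)"
      by (simp add: algebra_simps sum.distrib sum_subtractf)
    have m3: "(\<Sum>i\<in>UNIV. pd \<delta> i * (A (Jd \<delta>) i - A J i)) = \<beta> * (Jd \<delta> - J) * (2 * Jp \<delta> - Jd \<delta> - J)"
    proof -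
      have "(\<Sum>i\<in>UNIV. pd \<delta> i * (A (Jd \<delta>) i - A J i))
           = (\<Sum>i\<in>UNIV. (\<beta> * (Jd \<delta> - J)) * (2 * (pd \<delta> i * R i) - (Jd \<delta> + J) * pd \<delta> i))"
        unfolding A_def by (intro sum.cong) (simp_all add: algebra_simps power2_eq_square)
      also have "\<dots> = (\<beta> * (Jd \<delta> - J)) * (2 * Jp \<delta> - (Jd \<delta> + J) * (\<Sum>i\<in>UNIV. pd \<delta> i))"
        unfolding Jp_def by (simp add: sum_distrib_left[symmetric] sum_subtractf)
      finally show ?thesis using ps1[OF dI'] by (simp add: algebra_simps)
    qed
    have m4: "(\<Sum>i\<in>UNIV. (pd \<delta> i - \<pi> i) * A J i) = \<delta> * (\<Sum>j\<in>UNIV. (\<Sum>i\<in>UNIV. pd \<delta> i * (P' i j - P i j)) * g j)"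
    proof -
      define e where "e = (\<lambda>i. pd \<delta> i - \<pi> i)"
      have e0: "(\<Sum>i\<in>UNIV. e i) = 0" unfolding e_def using ps1[OF dI'] pis1 by (simp add: sum_subtractf)
      have fA: "A J i = g i + J_ms \<beta> p r d - (\<Sum>j\<in>UNIV. P i j * g j)" for i
        using poisson[of i] unfolding A_def f_vec_def R_def J_def P_def by simp
      have "(\<Sum>i\<in>UNIV. e i * A J i) = (\<Sum>i\<in>UNIV. e i * g i) + J_ms \<beta> p r d * (\<Sum>i\<in>UNIV. e i)
           - (\<Sum>i\<in>UNIV. \<Sum>j\<in>UNIV. e i * P i j * g j)"
        unfolding fA by (simp add: algebra_simps sum.distrib sum_subtractf sum_distrib_left sum_distrib_right)
      also have "(\<Sum>i\<in>UNIV. \<Sum>j\<in>UNIV. e i * P i j * g j) = (\<Sum>j\<in>UNIV. (\<Sum>i\<in>UNIV. e i * P i j) * g j)"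
        by (subst sum.swap) (simp add: sum_distrib_right)
      finally have "(\<Sum>i\<in>UNIV. e i * A J i) = (\<Sum>j\<in>UNIV. (e j - (\<Sum>i\<in>UNIV. e i * P i j)) * g j)"
        using e0 by (simp add: algebra_simps sum_subtractf)
      also have "\<dots> = (\<Sum>j\<in>UNIV. (\<delta> * (\<Sum>i\<in>UNIV. pd \<delta> i * (P' i j - P i j))) * g j)"
        unfolding e_def by (intro sum.cong refl) (simp add: ide[OF dI'])
      also have "\<dots> = \<delta> * (\<Sum>j\<in>UNIV. (\<Sum>i\<in>UNIV. pd \<delta> i * (P' i j - P i j)) * g j)"
        by (subst sum_distrib_left) (rule sum.cong, simp_all add: mult.assoc)
      finally show ?thesis unfolding e_def .
    qed
    have h: "\<delta> * (\<beta> * ((Jd \<delta> - J) / \<delta>) * (2 * Jp \<delta> - Jd \<delta> - J))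
             = \<beta> * (Jd \<delta> - J) * (2 * Jp \<delta> - Jd \<delta> - J)" using dI by simp
    have "mix_ms \<beta> p r d d' \<delta> - mix_ms \<beta> p r d d' 0 = \<delta> * RHS \<delta>"
      unfolding ms0 m1 Jms_eq RHS_def distrib_left h
      using m2 m3 m4 by linarith
    then show ?thesis using dI by simp
  qed
  define F where "F = at (0::real) within {0..1}"
  have evI: "eventually (\<lambda>\<delta>. \<delta> \<in> {0<..1}) F"
    unfolding F_def eventually_at_filter by (intro always_eventually) auto
  have id0: "((\<lambda>\<delta>::real. \<delta>) \<longlongrightarrow> 0) F" unfolding F_def by (rule tendsto_ident_at)
  have pdlim: "((\<lambda>\<delta>. pd \<delta> i) \<longlongrightarrow> \<pi> i) F" for i
  proof -
    have "((\<lambda>\<delta>. pd \<delta> i - \<pi> i) \<longlongrightarrow> 0) F"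
    proof (rule Lim_null_comparison)
      show "eventually (\<lambda>\<delta>. norm (pd \<delta> i - \<pi> i) \<le> L * \<delta>) F"
        using evI by eventually_elim (use eb in auto)
      show "((\<lambda>\<delta>. L * \<delta>) \<longlongrightarrow> 0) F" using tendsto_mult[OF tendsto_const id0, of L] by simp
    qed
    then show ?thesis by (simp add: Lim_null[symmetric])
  qed
  have Jdlim: "(Jd \<longlongrightarrow> J) F"
  proof -
    have "((\<lambda>\<delta>. \<Sum>i\<in>UNIV. pd \<delta> i * (R i + \<delta> * (R' i - R i))) \<longlongrightarrow> (\<Sum>i\<in>UNIV. \<pi> i * (R i + 0 * (R' i - R i)))) F"
      by (intro tendsto_sum tendsto_mult tendsto_add tendsto_const pdlim id0)
    then show ?thesis unfolding Jd_eq[abs_def] J_eq by simp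
  qed
  have Jplim: "(Jp \<longlongrightarrow> J) F"
  proof -
    have "((\<lambda>\<delta>. \<Sum>i\<in>UNIV. pd \<delta> i * R i) \<longlongrightarrow> (\<Sum>i\<in>UNIV. \<pi> i * R i)) F"
      by (intro tendsto_sum tendsto_mult tendsto_const pdlim)
    then show ?thesis unfolding Jp_def J_eq .
  qed
  have t1: "((\<lambda>\<delta>. \<beta> * ((Jd \<delta> - J) / \<delta>) * (2 * Jp \<delta> - Jd \<delta> - J)) \<longlongrightarrow> 0) F"
  proof (rule Lim_null_comparison)
    show "eventually (\<lambda>\<delta>. norm (\<beta> * ((Jd \<delta> - J) / \<delta>) * (2 * Jp \<delta> - Jd \<delta> - J))
            \<le> \<beta> * Bc * \<bar>2 * Jp \<delta> - Jd \<delta> - J\<bar>) F"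
      using evI
    proof eventually_elim
      case (elim \<delta>)
      then have dI': "\<delta> \<in> {0..1}" and dp: "\<delta> > 0" by auto
      have q: "\<bar>(Jd \<delta> - J) / \<delta>\<bar> \<le> Bc" using Jb[OF dI'] dp by (simp add: field_simps)
      have "norm (\<beta> * ((Jd \<delta> - J) / \<delta>) * (2 * Jp \<delta> - Jd \<delta> - J))
            = \<beta> * \<bar>(Jd \<delta> - J) / \<delta>\<bar> * \<bar>2 * Jp \<delta> - Jd \<delta> - J\<bar>"
        using beta_pos by (simp add: abs_mult)
      also have "\<dots> \<le> \<beta> * Bc * \<bar>2 * Jp \<delta> - Jd \<delta> - J\<bar>"
        using q beta_pos by (intro mult_right_mono mult_left_mono) auto
      finally show ?case .
    qed
    have "((\<lambda>\<delta>. \<beta> * Bc * \<bar>2 * Jp \<delta> - Jd \<delta> - J\<bar>) \<longlongrightarrow> \<beta> * Bc * \<bar>2 * J - J - J\<bar>) F"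
      by (intro tendsto_intros Jplim Jdlim)
    then show "((\<lambda>\<delta>. \<beta> * Bc * \<bar>2 * Jp \<delta> - Jd \<delta> - J\<bar>) \<longlongrightarrow> 0) F" by simp
  qed
  have t2: "((\<lambda>\<delta>. (\<Sum>j\<in>UNIV. (\<Sum>i\<in>UNIV. pd \<delta> i * (P' i j - P i j)) * g j)) \<longlongrightarrow>
              (\<Sum>j\<in>UNIV. (\<Sum>i\<in>UNIV. \<pi> i * (P' i j - P i j)) * g j)) F"
    by (intro tendsto_sum tendsto_mult tendsto_const pdlim)
  have t3: "((\<lambda>\<delta>. (\<Sum>i\<in>UNIV. pd \<delta> i * (B (Jd \<delta>) i - A (Jd \<delta>) i))) \<longlongrightarrow>
              (\<Sum>i\<in>UNIV. \<pi> i * (B J i - A J i))) F"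
    unfolding A_def B_def by (intro tendsto_intros pdlim Jdlim)
  have lim: "(RHS \<longlongrightarrow> 0 + (\<Sum>j\<in>UNIV. (\<Sum>i\<in>UNIV. \<pi> i * (P' i j - P i j)) * g j)
                     + (\<Sum>i\<in>UNIV. \<pi> i * (B J i - A J i))) F"
    unfolding RHS_def by (intro tendsto_add t1 t2 t3)
  have lim2: "((\<lambda>\<delta>. (mix_ms \<beta> p r d d' \<delta> - mix_ms \<beta> p r d d' 0) / (\<delta> - 0)) \<longlongrightarrow>
       0 + (\<Sum>j\<in>UNIV. (\<Sum>i\<in>UNIV. \<pi> i * (P' i j - P i j)) * g j)
                     + (\<Sum>i\<in>UNIV. \<pi> i * (B J i - A J i))) F"
  proof (rule Lim_transform_eventually[OF lim])
    show "eventually (\<lambda>\<delta>. RHS \<delta> = (mix_ms \<beta> p r d d' \<delta> - mix_ms \<beta> p r d d' 0) / (\<delta> - 0)) F"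
      using evI
    proof eventually_elim
      case (elim \<delta>)
      show ?case using Qeq[OF elim] by simp
    qed
  qed
  have Deq: "0 + (\<Sum>j\<in>UNIV. (\<Sum>i\<in>UNIV. \<pi> i * (P' i j - P i j)) * g j)
                     + (\<Sum>i\<in>UNIV. \<pi> i * (B J i - A J i))
      = (\<Sum>i\<in>UNIV. stat_dist (Pmat p d) i *
              ((\<Sum>j\<in>UNIV. (Pmat p d' i j - Pmat p d i j) * g j)
               + r i (d' i) - \<beta> * (r i (d' i) - J_mu p r d)\<^sup>2
               - r i (d i) + \<beta> * (r i (d i) - J_mu p r d)\<^sup>2))"
  proof -
    have "(\<Sum>j\<in>UNIV. (\<Sum>i\<in>UNIV. \<pi> i * (P' i j - P i j)) * g j)
          = (\<Sum>i\<in>UNIV. \<pi> i * (\<Sum>j\<in>UNIV. (P' i j - P i j) * g j))"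
      by (simp only: sum_distrib_left sum_distrib_right mult.assoc) (rule sum.swap)
    then have "0 + (\<Sum>j\<in>UNIV. (\<Sum>i\<in>UNIV. \<pi> i * (P' i j - P i j)) * g j)
                     + (\<Sum>i\<in>UNIV. \<pi> i * (B J i - A J i))
      = (\<Sum>i\<in>UNIV. \<pi> i * (\<Sum>j\<in>UNIV. (P' i j - P i j) * g j) + \<pi> i * (B J i - A J i))"
      by (simp add: sum.distrib)
    also have "\<dots> = (\<Sum>i\<in>UNIV. \<pi> i *
              ((\<Sum>j\<in>UNIV. (P' i j - P i j) * g j)
               + r i (d' i) - \<beta> * (r i (d' i) - J)\<^sup>2
               - r i (d i) + \<beta> * (r i (d i) - J)\<^sup>2))"
      by (intro sum.cong refl) (simp add: A_def B_def R_def R'_def algebra_simps)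
    finally show ?thesis
      unfolding \<pi>_def P_def P'_def J_def .
  qed
  show ?thesis
    unfolding has_field_derivative_iff using lim2 unfolding F_def Deq .
qed
end
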